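(* Let $\beta>0$ and $\varepsilon>0$. There is $c>0$ such that for every $K\in\mathbb N^\star$ and every $N$ large enough, $$\sup_{t\in[0,\varepsilon/(4c_M)]}\ \sup_J\ \mathbf P^{J,\Lambda_N,+}_{\mu^{J,+}_{\Lambda_N}}\left(\|\mathcal M_K(\sigma(t))-\mathcal M_K(\sigma(0))\|_{L^1}\ge\varepsilon\right)\le\exp(-cN^d).$$
   Context: $d\ge2$, $\Lambda_N=\{1,\dots,N\}^d$, couplings $J\in[0,1]^{E(\mathbb Z^d)}$. $\mu^{J,+}_{\Lambda_N}$ is the Ising measure with plus boundary condition on $\Lambda_N$ (weight $\propto\exp(\frac\beta2\sum_{\{x,y\}:x\in\Lambda_N,x\sim y}J_{xy}\sigma_x\sigma_y)$). $\mathbf P^{J,\Lambda_N,+}_{\mu}$ is the law of the Glauber dynamics in $\Lambda_N$ with plus boundary condition started from initial distribution $\mu$, whose spin-flip rates $c^J(x,\sigma)$ are of finite range, satisfy $c_m\le c^J\le c_M$ for constants $0<c_m\le c_M<\infty$, satisfy detailed balance, are translation invariant and attractive. For a mesoscopic scale $K$, the magnetization profile is $\mathcal M_K(\sigma):[0,1]^d\to[-1,1]$, $\mathcal M_K(\sigma)(x)=K^{-d}\sum_{z\in\Lambda_N\cap\Delta_{i(x)}}\sigma_z$, where $i(x)=([Nx_1/K],\dots,[Nx_d/K])$ and $\Delta_i=Ki+\{1,\dots,K\}^d$; $\|\cdot\|_{L^1}$ is the $L^1([0,1]^d)$ norm. *)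

theory Defs
  imports "HOL-Analysis.Analysis"
begin

type_synonym 'd site = "int ^ 'd"
type_synonym 'd config = "'d site \<Rightarrow> int"
type_synonym 'd coupling = "'d site set \<Rightarrow> real"   (* J indexed by unordered edges {x,y} *)
type_synonym 'd rates = "'d coupling \<Rightarrow> 'd site \<Rightarrow> 'd config \<Rightarrow> real"

definition l1dist :: "'d::finite site \<Rightarrow> 'd site \<Rightarrow> int" where
  "l1dist x y = (\<Sum>i\<in>UNIV. \<bar>x $ i - y $ i\<bar>)"

definition nb :: "'d::finite site \<Rightarrow> 'd site \<Rightarrow> bool" where
  "nb x y \<longleftrightarrow> l1dist x y = 1"

definition Lam :: "nat \<Rightarrow> 'd::finite site set" where
  "Lam N = {x. \<forall>i. 1 \<le> x $ i \<and> x $ i \<le> int N}"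

definition spins :: "'d config set" where
  "spins = {\<sigma>. \<forall>x. \<sigma> x = 1 \<or> \<sigma> x = -1}"

definition Omega :: "nat \<Rightarrow> 'd::finite config set" where
  "Omega N = {\<sigma> \<in> spins. \<forall>x. x \<notin> Lam N \<longrightarrow> \<sigma> x = 1}"

definition admissible :: "'d::finite coupling \<Rightarrow> bool" where
  "admissible J \<longleftrightarrow> (\<forall>x y. nb x y \<longrightarrow> 0 \<le> J {x, y} \<and> J {x, y} \<le> 1)"

definition flip :: "'d config \<Rightarrow> 'd site \<Rightarrow> 'd config" where
  "flip \<sigma> x = \<sigma>(x := - \<sigma> x)"

definition edgesN :: "nat \<Rightarrow> 'd::finite site set set" where
  "edgesN N = {{x, y} | x y. x \<in> Lam N \<and> nb x y}"

definition ising_weight :: "real \<Rightarrow> 'd::finite coupling \<Rightarrow> nat \<Rightarrow> 'd config \<Rightarrow> real" where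
  "ising_weight \<beta> J N \<sigma> =
     exp (\<beta> / 2 * (\<Sum>e\<in>edgesN N. J e * (\<Prod>z\<in>e. real_of_int (\<sigma> z))))"

definition ising :: "real \<Rightarrow> 'd::finite coupling \<Rightarrow> nat \<Rightarrow> 'd config \<Rightarrow> real" where
  "ising \<beta> J N \<sigma> = ising_weight \<beta> J N \<sigma> / (\<Sum>\<eta>\<in>Omega N. ising_weight \<beta> J N \<eta>)"

definition glauber_gen :: "'d::finite rates \<Rightarrow> 'd coupling \<Rightarrow> nat \<Rightarrow> 'd config \<Rightarrow> 'd config \<Rightarrow> real" where
  "glauber_gen c J N \<sigma> \<eta> =
     (if \<eta> = \<sigma> then - (\<Sum>x\<in>Lam N. c J x \<sigma>)
      else (\<Sum>x\<in>Lam N. if \<eta> = flip \<sigma> x then c J x \<sigma> else 0))"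

primrec mpow :: "'s set \<Rightarrow> ('s \<Rightarrow> 's \<Rightarrow> real) \<Rightarrow> nat \<Rightarrow> 's \<Rightarrow> 's \<Rightarrow> real" where
  "mpow S Q 0 = (\<lambda>a b. if a = b then 1 else 0)"
| "mpow S Q (Suc n) = (\<lambda>a b. \<Sum>z\<in>S. mpow S Q n a z * Q z b)"

definition trans_kernel :: "'s set \<Rightarrow> ('s \<Rightarrow> 's \<Rightarrow> real) \<Rightarrow> real \<Rightarrow> 's \<Rightarrow> 's \<Rightarrow> real" where
  "trans_kernel S Q t a b = (\<Sum>n. t ^ n / fact n * mpow S Q n a b)"

definition magn :: "nat \<Rightarrow> nat \<Rightarrow> 'd::finite config \<Rightarrow> real ^ 'd \<Rightarrow> real" where
  "magn K N \<sigma> u =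
     (1 / real K ^ CARD('d)) *
     (\<Sum>z\<in>{z \<in> Lam N. \<forall>j. int K * \<lfloor>real N * u $ j / real K\<rfloor> + 1 \<le> z $ j
                              \<and> z $ j \<le> int K * \<lfloor>real N * u $ j / real K\<rfloor> + int K}.
        real_of_int (\<sigma> z))"

definition L1dist :: "(real ^ 'd::finite \<Rightarrow> real) \<Rightarrow> (real ^ 'd \<Rightarrow> real) \<Rightarrow> real" where
  "L1dist f g = integral (cbox 0 One) (\<lambda>u. \<bar>f u - g u\<bar>)"

definition dyn_prob :: "real \<Rightarrow> 'd::finite rates \<Rightarrow> 'd coupling \<Rightarrow> nat \<Rightarrow> nat \<Rightarrow> real \<Rightarrow> real \<Rightarrow> real" where
  "dyn_prob \<beta> c J N K t \<epsilon> =
     (\<Sum>\<sigma>\<in>Omega N. \<Sum>\<eta>\<in>Omega N.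
        ising \<beta> J N \<sigma> * trans_kernel (Omega N) (glauber_gen c J N) t \<sigma> \<eta> *
        (if L1dist (magn K N \<eta>) (magn K N \<sigma>) \<ge> \<epsilon> then 1 else 0))"

definition rates_ok :: "real \<Rightarrow> real \<Rightarrow> real \<Rightarrow> 'd::finite rates \<Rightarrow> bool" where
  "rates_ok \<beta> cm cM c \<longleftrightarrow>
     0 < cm \<and> cm \<le> cM \<and>
     \<comment> \<open>bounds\<close>
     (\<forall>J x \<sigma>. admissible J \<and> \<sigma> \<in> spins \<longrightarrow> cm \<le> c J x \<sigma> \<and> c J x \<sigma> \<le> cM) \<and>
     \<comment> \<open>finite range\<close>
     (\<exists>R::int. \<forall>J J' x \<sigma> \<sigma>'. admissible J \<and> admissible J' \<and> \<sigma> \<in> spins \<and> \<sigma>' \<in> spins \<and>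
         (\<forall>y. l1dist x y \<le> R \<longrightarrow> \<sigma> y = \<sigma>' y) \<and>
         (\<forall>y z. nb y z \<and> l1dist x y \<le> R \<and> l1dist x z \<le> R \<longrightarrow> J {y, z} = J' {y, z})
         \<longrightarrow> c J x \<sigma> = c J' x \<sigma>') \<and>
     \<comment> \<open>detailed balance w.r.t. the Ising Gibbs weights\<close>
     (\<forall>J x \<sigma>. admissible J \<and> \<sigma> \<in> spins \<longrightarrow>
         c J x \<sigma> = c J x (flip \<sigma> x) *
            exp (- \<beta> * (\<Sum>y\<in>{y. nb x y}. J {x, y} * real_of_int (\<sigma> x * \<sigma> y)))) \<and>
     \<comment> \<open>translation invariance\<close>
     (\<forall>J x \<sigma> a. admissible J \<and> \<sigma> \<in> spins \<longrightarrow>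
         c (\<lambda>e. J ((\<lambda>u. u + a) ` e)) x (\<lambda>u. \<sigma> (u + a)) = c J (x + a) \<sigma>) \<and>
     \<comment> \<open>attractiveness\<close>
     (\<forall>J x \<sigma> \<eta>. admissible J \<and> \<sigma> \<in> spins \<and> \<eta> \<in> spins \<and> (\<forall>y. \<sigma> y \<le> \<eta> y) \<longrightarrow>
         (\<sigma> x = 1 \<and> \<eta> x = 1 \<longrightarrow> c J x \<eta> \<le> c J x \<sigma>) \<and>
         (\<sigma> x = -1 \<and> \<eta> x = -1 \<longrightarrow> c J x \<sigma> \<le> c J x \<eta>))"

end

theory Submission
  imports Defs
begin

lemma pascal_step:
  fixes s :: "nat \<Rightarrow> real" and a :: real
  shows "(\<Sum>k\<le>n. real (n choose k) * (-a)^(n-k) * (s (Suc k) - a * s k)) =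
         (\<Sum>k\<le>Suc n. real (Suc n choose k) * (-a)^(Suc n - k) * s k)"
proof -
  have A: "(\<Sum>k\<le>n. real (n choose k) * (-a)^(n-k) * (s (Suc k) - a * s k)) =
     (\<Sum>k\<le>n. real (n choose k) * (-a)^(n-k) * s (Suc k)) + (\<Sum>k\<le>n. real (n choose k) * (-a)^(Suc n-k) * s k)"
    by (auto simp: sum.distrib[symmetric] algebra_simps Suc_diff_le intro!: sum.cong)
  have B: "(\<Sum>k\<le>Suc n. real (Suc n choose k) * (-a)^(Suc n - k) * s k) =
      (-a)^(Suc n) * s 0 + (\<Sum>k\<le>n. real (n choose k) * (-a)^(n-k) * s (Suc k))
        + (\<Sum>k\<le>n. real (n choose Suc k) * (-a)^(n-k) * s (Suc k))"
    apply (subst sum.atMost_Suc_shift)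
    apply (simp only: binomial_Suc_Suc of_nat_add distrib_right sum.distrib diff_Suc_Suc)
    by simp
  have C: "(\<Sum>k\<le>Suc n. real (n choose k) * (-a)^(Suc n - k) * s k) =
      (-a)^(Suc n) * s 0 + (\<Sum>k\<le>n. real (n choose Suc k) * (-a)^(n-k) * s (Suc k))"
    apply (subst sum.atMost_Suc_shift) by simp
  have D: "(\<Sum>k\<le>Suc n. real (n choose k) * (-a)^(Suc n - k) * s k) =
      (\<Sum>k\<le>n. real (n choose k) * (-a)^(Suc n-k) * s k)"
    by simp
  show ?thesis using A B C D by linarith
qed

definition Qop :: "'s set \<Rightarrow> ('s \<Rightarrow> 's \<Rightarrow> real) \<Rightarrow> ('s \<Rightarrow> real) \<Rightarrow> 's \<Rightarrow> real" where
  "Qop S Q f z = (\<Sum>b\<in>S. Q z b * f b)"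

definition Bop :: "'s set \<Rightarrow> ('s \<Rightarrow> 's \<Rightarrow> real) \<Rightarrow> real \<Rightarrow> ('s \<Rightarrow> real) \<Rightarrow> 's \<Rightarrow> real" where
  "Bop S Q a f z = Qop S Q f z + a * f z"

definition nrm :: "'s set \<Rightarrow> ('s \<Rightarrow> real) \<Rightarrow> real" where
  "nrm S f = (\<Sum>b\<in>S. \<bar>f b\<bar>)"

lemma mpow_Qop:
  assumes "finite S" "a \<in> S"
  shows "(\<Sum>b\<in>S. mpow S Q n a b * f b) = (Qop S Q ^^ n) f a"
  using assms(2)
proof (induction n arbitrary: f)
  case 0 then show ?case using assms(1) by (simp add: if_distrib[where f="\<lambda>x. x * f _"] sum.delta cong: if_cong)
next
  case (Suc n)
  have "(\<Sum>b\<in>S. mpow S Q (Suc n) a b * f b) = (\<Sum>b\<in>S. \<Sum>z\<in>S. mpow S Q n a z * Q z b * f b)"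
    by (simp add: sum_distrib_right)
  also have "\<dots> = (\<Sum>z\<in>S. mpow S Q n a z * Qop S Q f z)"
    by (subst sum.swap) (simp add: Qop_def sum_distrib_left mult.assoc)
  also have "\<dots> = (Qop S Q ^^ n) (Qop S Q f) a" using Suc by simp
  finally show ?case by (simp add: funpow_Suc_right del: funpow.simps)
qed

lemma nrm_ge: "finite S \<Longrightarrow> z \<in> S \<Longrightarrow> \<bar>f z\<bar> \<le> nrm S f"
  unfolding nrm_def by (rule member_le_sum) auto

lemma nrm_nonneg: "0 \<le> nrm S f"
  unfolding nrm_def by (simp add: sum_nonneg)

lemma Qop_bound:
  assumes "finite S"
  shows "nrm S (Qop S Q f) \<le> (real (card S) * (\<Sum>z\<in>S. \<Sum>b\<in>S. \<bar>Q z b\<bar>)) * nrm S f"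
proof -
  let ?C = "\<Sum>z\<in>S. \<Sum>b\<in>S. \<bar>Q z b\<bar>"
  have Qb: "\<bar>Q z b\<bar> \<le> ?C" if "z \<in> S" "b \<in> S" for z b
  proof -
    have "\<bar>Q z b\<bar> \<le> (\<Sum>b\<in>S. \<bar>Q z b\<bar>)" by (rule member_le_sum) (use assms that in auto)
    also have "\<dots> \<le> ?C" by (rule member_le_sum[where f="\<lambda>z. \<Sum>b\<in>S. \<bar>Q z b\<bar>"]) (use assms that in \<open>auto intro: sum_nonneg\<close>)
    finally show ?thesis .
  qed
  have pt: "\<bar>Qop S Q f z\<bar> \<le> ?C * nrm S f" if "z \<in> S" for z
  proof -
    have "\<bar>Qop S Q f z\<bar> \<le> (\<Sum>b\<in>S. \<bar>Q z b\<bar> * \<bar>f b\<bar>)"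
      unfolding Qop_def by (rule order_trans[OF sum_abs]) (simp add: abs_mult)
    also have "\<dots> \<le> (\<Sum>b\<in>S. ?C * \<bar>f b\<bar>)"
      by (rule sum_mono, rule mult_right_mono) (use Qb that in auto)
    finally show ?thesis by (simp add: nrm_def sum_distrib_left)
  qed
  have "nrm S (Qop S Q f) \<le> (\<Sum>z\<in>S. ?C * nrm S f)"
    unfolding nrm_def[of S "Qop S Q f"] by (rule sum_mono) (use pt in auto)
  then show ?thesis by simp
qed

lemma Bop_bound:
  assumes "finite S"
  shows "nrm S (Bop S Q a f) \<le> (real (card S) * (\<Sum>z\<in>S. \<Sum>b\<in>S. \<bar>Q z b\<bar>) + \<bar>a\<bar>) * nrm S f"
proof -
  have "nrm S (Bop S Q a f) \<le> nrm S (Qop S Q f) + \<bar>a\<bar> * nrm S f"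
    unfolding nrm_def Bop_def by (simp add: sum_distrib_left sum.distrib[symmetric]) (rule sum_mono, metis abs_mult abs_triangle_ineq)
  then show ?thesis using Qop_bound[OF assms, of Q f] by (simp add: algebra_simps)
qed

lemma pow_bound:
  assumes "\<And>f. nrm S (T f) \<le> L * nrm S f" "0 \<le> L"
  shows "nrm S ((T ^^ n) f) \<le> L ^ n * nrm S f"
proof (induction n)
  case 0 then show ?case by simp
next
  case (Suc n)
  have "nrm S ((T ^^ Suc n) f) \<le> L * nrm S ((T ^^ n) f)" using assms(1) by simp
  also have "\<dots> \<le> L * (L ^ n * nrm S f)" by (rule mult_left_mono[OF Suc assms(2)])
  finally show ?case by simp
qed

lemma Qop_sum:
  "Qop S Q (\<lambda>z. \<Sum>k\<in>I. c k * g k z) z = (\<Sum>k\<in>I. c k * Qop S Q (g k) z)"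
  unfolding Qop_def by (simp add: sum_distrib_left sum.swap[of _ S] mult.left_commute)

lemma Qop_binom:
  "(Qop S Q ^^ n) f z = (\<Sum>k\<le>n. real (n choose k) * (-a)^(n-k) * (Bop S Q a ^^ k) f z)"
proof (induction n arbitrary: z)
  case 0 then show ?case by simp
next
  case (Suc n)
  have "(Qop S Q ^^ Suc n) f z = Qop S Q ((Qop S Q ^^ n) f) z" by simp
  also have "\<dots> = Qop S Q (\<lambda>z. \<Sum>k\<le>n. (real (n choose k) * (-a)^(n-k)) * (Bop S Q a ^^ k) f z) z"
    using Suc by (metis (no_types) mult.assoc)
  also have "\<dots> = (\<Sum>k\<le>n. (real (n choose k) * (-a)^(n-k)) * Qop S Q ((Bop S Q a ^^ k) f) z)"
    by (rule Qop_sum)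
  also have "\<dots> = (\<Sum>k\<le>n. real (n choose k) * (-a)^(n-k) * ((Bop S Q a ^^ Suc k) f z - a * (Bop S Q a ^^ k) f z))"
    by (simp add: Bop_def)
  also have "\<dots> = (\<Sum>k\<le>Suc n. real (Suc n choose k) * (-a)^(Suc n - k) * (Bop S Q a ^^ k) f z)"
    by (rule pascal_step)
  finally show ?case .
qed

lemma exp_sums_real: "(\<lambda>n. x^n / fact n) sums exp (x::real)"
  using exp_converges[of x] by (simp add: divide_inverse mult.commute)

lemma summable_geo_exp:
  fixes x :: "nat \<Rightarrow> real"
  assumes "\<And>n. \<bar>x n\<bar> \<le> L ^ n * C" "0 \<le> L"
  shows "summable (\<lambda>n. norm (t^n / fact n * x n))"
proof -
  have s0: "summable (\<lambda>n. (\<bar>t\<bar> * L)^n / fact n)"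
    using exp_sums_real sums_summable by blast
  have s: "summable (\<lambda>n. C * ((\<bar>t\<bar> * L)^n / fact n))"
    by (rule summable_mult[OF s0])
  show ?thesis
  proof (rule summable_comparison_test'[OF s])
    fix n :: nat
    have "norm (norm (t^n / fact n * x n)) = \<bar>t\<bar>^n / fact n * \<bar>x n\<bar>"
      by (simp add: abs_mult power_abs)
    also have "\<dots> \<le> \<bar>t\<bar>^n / fact n * (L^n * C)"
      by (rule mult_left_mono[OF assms(1)]) simp
    also have "\<dots> = C * ((\<bar>t\<bar> * L)^n / fact n)" by (simp add: power_mult_distrib)
    finally show "norm (norm (t^n / fact n * x n)) \<le> C * ((\<bar>t\<bar> * L)^n / fact n)" .
  qed
qed

lemma summable_geo_exp':
  fixes x :: "nat \<Rightarrow> real"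
  assumes "\<And>n. \<bar>x n\<bar> \<le> L ^ n * C" "0 \<le> L"
  shows "summable (\<lambda>n. t^n / fact n * x n)"
  by (rule summable_norm_cancel[OF summable_geo_exp[OF assms]])

lemma Qpow_bound:
  assumes "finite S" "z \<in> S"
  obtains L where "0 \<le> L" "\<And>n. \<bar>(Qop S Q ^^ n) f z\<bar> \<le> L ^ n * nrm S f"
proof -
  let ?L = "real (card S) * (\<Sum>z\<in>S. \<Sum>b\<in>S. \<bar>Q z b\<bar>)"
  have L0: "0 \<le> ?L" by (intro mult_nonneg_nonneg add_nonneg_nonneg sum_nonneg) auto
  show ?thesis
  proof (rule that[OF L0])
    fix n
    show "\<bar>(Qop S Q ^^ n) f z\<bar> \<le> ?L ^ n * nrm S f"
      by (rule order_trans[OF nrm_ge[OF assms] pow_bound[OF Qop_bound[OF assms(1)] L0]])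
  qed
qed

lemma Bpow_bound:
  assumes "finite S" "z \<in> S"
  obtains L where "0 \<le> L" "\<And>n. \<bar>(Bop S Q a ^^ n) f z\<bar> \<le> L ^ n * nrm S f"
proof -
  let ?L = "real (card S) * (\<Sum>z\<in>S. \<Sum>b\<in>S. \<bar>Q z b\<bar>) + \<bar>a\<bar>"
  have L0: "0 \<le> ?L" by (intro mult_nonneg_nonneg add_nonneg_nonneg sum_nonneg) auto
  show ?thesis
  proof (rule that[OF L0])
    fix n
    show "\<bar>(Bop S Q a ^^ n) f z\<bar> \<le> ?L ^ n * nrm S f"
      by (rule order_trans[OF nrm_ge[OF assms] pow_bound[OF Bop_bound[OF assms(1)] L0]])
  qed
qed

lemma kernel_Qop:
  assumes "finite S" "\<sigma> \<in> S"
  shows "(\<Sum>\<eta>\<in>S. trans_kernel S Q t \<sigma> \<eta> * f \<eta>) = (\<Sum>n. t^n / fact n * (Qop S Q ^^ n) f \<sigma>)"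
proof -
  have sm: "summable (\<lambda>n. t^n / fact n * mpow S Q n \<sigma> \<eta>)" if "\<eta> \<in> S" for \<eta>
  proof -
    have e: "mpow S Q n \<sigma> \<eta> = (Qop S Q ^^ n) (\<lambda>b. if b = \<eta> then 1 else 0) \<sigma>" for n
    proof -
      have "(\<Sum>b\<in>S. mpow S Q n \<sigma> b * (if b = \<eta> then 1 else 0)) = (\<Sum>b\<in>S. if b = \<eta> then mpow S Q n \<sigma> b else 0)"
        by (rule sum.cong) auto
      also have "\<dots> = mpow S Q n \<sigma> \<eta>" using that assms(1) by (simp only: sum.delta if_True)
      finally show ?thesis using mpow_Qop[OF assms, of Q n "\<lambda>b. if b = \<eta> then 1 else 0"] by simp
    qed
    obtain L where "0 \<le> L" "\<And>n. \<bar>(Qop S Q ^^ n) (\<lambda>b. if b = \<eta> then 1 else 0) \<sigma>\<bar> \<le> L ^ n * nrm S (\<lambda>b. if b = \<eta> then 1 else 0)"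
      using Qpow_bound[OF assms] by blast
    then show ?thesis
      unfolding e by (intro summable_geo_exp') 
  qed
  have "(\<Sum>\<eta>\<in>S. trans_kernel S Q t \<sigma> \<eta> * f \<eta>) = (\<Sum>\<eta>\<in>S. \<Sum>n. t^n / fact n * mpow S Q n \<sigma> \<eta> * f \<eta>)"
    unfolding trans_kernel_def
    by (rule sum.cong[OF refl], rule suminf_mult2, rule sm)
  also have "\<dots> = (\<Sum>n. \<Sum>\<eta>\<in>S. t^n / fact n * mpow S Q n \<sigma> \<eta> * f \<eta>)"
    by (rule suminf_sum[symmetric], rule summable_mult2, rule sm)
  also have "\<dots> = (\<Sum>n. t^n / fact n * (Qop S Q ^^ n) f \<sigma>)"
    by (simp add: mpow_Qop[OF assms, symmetric] sum_distrib_left mult.assoc)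
  finally show ?thesis .
qed

lemma Qop_series_uniform:
  assumes "finite S" "\<sigma> \<in> S"
  shows "summable (\<lambda>k. t^k / fact k * (Bop S Q a ^^ k) f \<sigma>)"
    and "(\<Sum>n. t^n / fact n * (Qop S Q ^^ n) f \<sigma>) = exp (-a*t) * (\<Sum>k. t^k / fact k * (Bop S Q a ^^ k) f \<sigma>)"
proof -
  obtain L where L: "0 \<le> L" "\<And>n. \<bar>(Bop S Q a ^^ n) f \<sigma>\<bar> \<le> L ^ n * nrm S f"
    using Bpow_bound[OF assms] by blast
  let ?q = "\<lambda>k. t^k / fact k * (Bop S Q a ^^ k) f \<sigma>"
  let ?p = "\<lambda>i. (-a*t)^i / fact i"
  have nq: "summable (\<lambda>k. norm (?q k))" by (rule summable_geo_exp[OF L(2,1)])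
  then show "summable ?q" by (rule summable_norm_cancel)
  have np: "summable (\<lambda>k. norm (?p k))"
  proof -
    have "summable (\<lambda>n. norm ((-a*t)^n / fact n * (1::real)))"
      by (rule summable_geo_exp[where L=1 and C=1]) auto
    then show ?thesis by simp
  qed
  have cp: "(\<lambda>n. \<Sum>i\<le>n. ?q i * ?p (n - i)) sums ((\<Sum>k. ?q k) * (\<Sum>k. ?p k))"
    by (rule Cauchy_product_sums[OF nq np])
  have pe: "(\<Sum>k. ?p k) = exp (-a*t)" by (rule sums_unique[OF exp_sums_real, symmetric])
  have eq: "(\<Sum>i\<le>n. ?q i * ?p (n - i)) = t^n / fact n * (Qop S Q ^^ n) f \<sigma>" for n
  proof -
    have "t^n / fact n * (Qop S Q ^^ n) f \<sigma> =
       (\<Sum>k\<le>n. t^n / fact n * (real (n choose k) * (-a)^(n-k) * (Bop S Q a ^^ k) f \<sigma>))"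
      unfolding Qop_binom[where a=a] by (rule sum_distrib_left)
    also have "\<dots> = (\<Sum>i\<le>n. ?q i * ?p (n - i))"
    proof (rule sum.cong[OF refl])
      fix k assume "k \<in> {..n}"
      then have kn: "k \<le> n" by simp
      have tn: "t^n = t^k * t^(n-k)" using kn by (simp add: power_add[symmetric])
      have fz: "(fact n::real) \<noteq> 0" "(fact k::real) \<noteq> 0" "(fact (n-k)::real) \<noteq> 0" by auto
      show "t^n / fact n * (real (n choose k) * (-a)^(n-k) * (Bop S Q a ^^ k) f \<sigma>) = ?q k * ?p (n - k)"
        unfolding binomial_fact[OF kn] tn power_mult_distrib using fz
        by (simp add: divide_simps)
    qed
    finally show ?thesis by (rule sym)
  qed
  show "(\<Sum>n. t^n / fact n * (Qop S Q ^^ n) f \<sigma>) = exp (-a*t) * (\<Sum>k. ?q k)"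
  proof -
    have "(\<Sum>n. t^n / fact n * (Qop S Q ^^ n) f \<sigma>) = (\<Sum>k. ?q k) * (\<Sum>k. ?p k)"
      using sums_unique[OF cp] unfolding eq by (rule sym)
    then show ?thesis unfolding pe by (simp only: mult.commute)
  qed
qed

lemma Bop_expand:
  assumes "finite S" "z \<in> S"
  shows "Bop S Q a f z = (\<Sum>b\<in>S. (Q z b + (if z = b then a else 0)) * f b)"
  using assms by (simp add: Bop_def Qop_def distrib_right sum.distrib if_distrib[where f="\<lambda>x. x * f _"] sum.delta cong: if_cong)

lemma Bop_mono:
  assumes "finite S" "z \<in> S" "\<And>z b. z \<in> S \<Longrightarrow> b \<in> S \<Longrightarrow> 0 \<le> Q z b + (if z = b then a else 0)"
    and "\<And>b. b \<in> S \<Longrightarrow> f b \<le> g b"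
  shows "Bop S Q a f z \<le> Bop S Q a g z"
  unfolding Bop_expand[OF assms(1,2)]
  by (rule sum_mono, rule mult_left_mono) (use assms in auto)

lemma Bop_scale: "Bop S Q a (\<lambda>z. c * g z) z = c * Bop S Q a g z"
  by (simp add: Bop_def Qop_def sum_distrib_left algebra_simps)

lemma markov_bound:
  assumes fin: "finite S" and sig: "\<sigma> \<in> S" and t: "0 \<le> t"
    and Bpos: "\<And>z b. z \<in> S \<Longrightarrow> b \<in> S \<Longrightarrow> 0 \<le> Q z b + (if z = b then a else 0)"
    and hg: "\<And>z. z \<in> S \<Longrightarrow> h z \<le> g z"
    and Qg: "\<And>z. z \<in> S \<Longrightarrow> Qop S Q g z \<le> lam * g z"
    and mu: "0 \<le> lam + a"
  shows "(\<Sum>\<eta>\<in>S. trans_kernel S Q t \<sigma> \<eta> * h \<eta>) \<le> exp (lam * t) * g \<sigma>"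
proof -
  let ?mu = "lam + a"
  have Bg: "Bop S Q a g z \<le> ?mu * g z" if "z \<in> S" for z
    using Qg[OF that] by (simp add: Bop_def algebra_simps)
  have ind: "(Bop S Q a ^^ k) h z \<le> ?mu ^ k * g z" if "z \<in> S" for k z
    using that
  proof (induction k arbitrary: z)
    case 0 then show ?case using hg by simp
  next
    case (Suc k)
    have "(Bop S Q a ^^ Suc k) h z = Bop S Q a ((Bop S Q a ^^ k) h) z" by simp
    also have "\<dots> \<le> Bop S Q a (\<lambda>z. ?mu ^ k * g z) z"
      by (rule Bop_mono[OF fin Suc.prems Bpos]) (use Suc.IH in auto)
    also have "\<dots> = ?mu ^ k * Bop S Q a g z" by (rule Bop_scale)
    also have "\<dots> \<le> ?mu ^ k * (?mu * g z)"
      by (rule mult_left_mono[OF Bg[OF Suc.prems]]) (use mu in simp)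
    finally show ?case by (simp add: algebra_simps)
  qed
  have "(\<Sum>\<eta>\<in>S. trans_kernel S Q t \<sigma> \<eta> * h \<eta>) = exp (-a*t) * (\<Sum>k. t^k / fact k * (Bop S Q a ^^ k) h \<sigma>)"
    using kernel_Qop[OF fin sig] Qop_series_uniform(2)[OF fin sig] by simp
  also have "\<dots> \<le> exp (-a*t) * (\<Sum>k. (?mu*t)^k / fact k * g \<sigma>)"
  proof (rule mult_left_mono)
    show "(\<Sum>k. t^k / fact k * (Bop S Q a ^^ k) h \<sigma>) \<le> (\<Sum>k. (?mu*t)^k / fact k * g \<sigma>)"
    proof (rule suminf_le)
      fix k
      have "t^k / fact k * (Bop S Q a ^^ k) h \<sigma> \<le> t^k / fact k * (?mu ^ k * g \<sigma>)"
        by (rule mult_left_mono[OF ind[OF sig]]) (use t in simp)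
      also have "t^k / fact k * (?mu ^ k * g \<sigma>) = (?mu*t)^k / fact k * g \<sigma>"
        by (simp add: power_mult_distrib)
      finally show "t^k / fact k * (Bop S Q a ^^ k) h \<sigma> \<le> (?mu*t)^k / fact k * g \<sigma>" .
      show "summable (\<lambda>k. t^k / fact k * (Bop S Q a ^^ k) h \<sigma>)" by (rule Qop_series_uniform(1)[OF fin sig])
      show "summable (\<lambda>k. (?mu*t)^k / fact k * g \<sigma>)"
        by (rule summable_mult2, rule sums_summable[OF exp_sums_real])
    qed
  qed simp
  also have "(\<Sum>k. (?mu*t)^k / fact k * g \<sigma>) = exp (?mu * t) * g \<sigma>"
    by (rule sums_unique[symmetric], rule sums_mult2, rule exp_sums_real)
  also have "exp (-a*t) * (exp (?mu * t) * g \<sigma>) = exp (lam * t) * g \<sigma>"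
    by (simp add: mult.assoc[symmetric] exp_add[symmetric] algebra_simps)
  finally show ?thesis .
qed

lemma block_div:
  fixes K :: int and f z :: int
  assumes K: "K \<ge> 1" and h1: "K * f + 1 \<le> z" and h2: "z \<le> K * f + K"
  shows "f = (z - 1) div K"
proof -
  have "(z - 1) div K = ((z - 1 - K * f) + f * K) div K" by (simp add: algebra_simps)
  also have "\<dots> = f + (z - 1 - K * f) div K" by (rule div_mult_self1) (use K in auto)
  also have "(z - 1 - K * f) div K = 0" using h1 h2 K by (intro div_pos_pos_trivial) auto
  finally show ?thesis by simp
qed

definition lo :: "nat \<Rightarrow> nat \<Rightarrow> 'd::finite site \<Rightarrow> real ^ 'd" where
  "lo K N z = (\<chi> j. real_of_int (int K * ((z $ j - 1) div int K)) / real N)"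
definition hi :: "nat \<Rightarrow> nat \<Rightarrow> 'd::finite site \<Rightarrow> real ^ 'd" where
  "hi K N z = (\<chi> j. real_of_int (int K * ((z $ j - 1) div int K) + int K) / real N)"

lemma in_block_box:
  fixes u :: "real ^ 'd::finite" and z :: "'d site"
  assumes K: "K \<ge> 1" and N: "N \<ge> 1"
    and hz: "\<forall>j. int K * \<lfloor>real N * u $ j / real K\<rfloor> + 1 \<le> z $ j
                 \<and> z $ j \<le> int K * \<lfloor>real N * u $ j / real K\<rfloor> + int K"
  shows "u \<in> cbox (lo K N z) (hi K N z)"
  unfolding mem_box_cart(2)
proof
  fix j
  let ?f = "\<lfloor>real N * u $ j / real K\<rfloor>"
  have fq: "?f = (z $ j - 1) div int K"
    by (rule block_div) (use K hz in auto)
  have a: "real_of_int ?f \<le> real N * u $ j / real K" by (rule of_int_floor_le)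
  have b: "real N * u $ j / real K < real_of_int ?f + 1" by (rule real_of_int_floor_add_one_gt)
  have Kp: "real K > 0" "real N > 0" using K N by auto
  from a have a': "real_of_int ?f * real K \<le> real N * u $ j" by (simp only: pos_le_divide_eq[OF Kp(1)])
  from b have b': "real N * u $ j < (real_of_int ?f + 1) * real K" by (simp only: pos_divide_less_eq[OF Kp(1)])
  show "lo K N z $ j \<le> u $ j \<and> u $ j \<le> hi K N z $ j"
  proof -
    have "lo K N z $ j = real K * real_of_int ?f / real N" unfolding lo_def using fq by simp
    also have "\<dots> \<le> u $ j" using a' Kp by (simp add: pos_divide_le_eq mult.commute)
    finally have 1: "lo K N z $ j \<le> u $ j" .
    have "u $ j \<le> (real_of_int ?f + 1) * real K / real N" using b' Kp by (simp add: pos_le_divide_eq mult.commute)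
    also have "\<dots> = hi K N z $ j" unfolding hi_def using fq by (simp add: algebra_simps)
    finally show ?thesis using 1 by simp
  qed
qed

lemma Lam_eq: "(Lam N :: 'd::finite site set) = vec_lambda ` (UNIV \<rightarrow>\<^sub>E {1..int N})"
proof (rule set_eqI)
  fix x :: "'d site"
  show "x \<in> Lam N \<longleftrightarrow> x \<in> vec_lambda ` (UNIV \<rightarrow>\<^sub>E {1..int N})"
  proof
    assume "x \<in> Lam N"
    then have "(\<lambda>i. x $ i) \<in> UNIV \<rightarrow>\<^sub>E {1..int N}" by (auto simp: Lam_def)
    moreover have "x = vec_lambda (\<lambda>i. x $ i)" by simp
    ultimately show "x \<in> vec_lambda ` (UNIV \<rightarrow>\<^sub>E {1..int N})" by (rule rev_image_eqI[where f=vec_lambda])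
  next
    assume "x \<in> vec_lambda ` (UNIV \<rightarrow>\<^sub>E {1..int N})"
    then obtain f where "f \<in> UNIV \<rightarrow>\<^sub>E {1..int N}" "x = vec_lambda f" by blast
    then show "x \<in> Lam N" by (auto simp: Lam_def)
  qed
qed

lemma finite_Lam: "finite (Lam N :: 'd::finite site set)"
  unfolding Lam_eq by (intro finite_imageI finite_PiE) auto

lemma card_Lam: "card (Lam N :: 'd::finite site set) = N ^ CARD('d)"
proof -
  have inj: "inj_on vec_lambda (UNIV \<rightarrow>\<^sub>E {1..int N} :: ('d \<Rightarrow> int) set)"
    by (auto simp: inj_on_def vec_lambda_inject)
  have "card (Lam N :: 'd site set) = card (UNIV \<rightarrow>\<^sub>E {1..int N} :: ('d \<Rightarrow> int) set)"
    unfolding Lam_eq by (rule card_image[OF inj])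
  also have "\<dots> = N ^ CARD('d)" by (simp add: card_PiE)
  finally show ?thesis .
qed

lemma magn_diff_bound:
  fixes \<sigma> \<eta> :: "'d::finite config"
  assumes K: "K \<ge> 1" and N: "N \<ge> 1" and sp: "\<sigma> \<in> spins" "\<eta> \<in> spins"
  shows "\<bar>magn K N \<eta> u - magn K N \<sigma> u\<bar> \<le>
     (\<Sum>z\<in>{z \<in> Lam N. \<eta> z \<noteq> \<sigma> z}. (2 / real K ^ CARD('d)) * indicator (cbox (lo K N z) (hi K N z)) u)"
proof -
  have finL: "finite (Lam N :: 'd site set)" by (rule finite_Lam)
  let ?P = "\<lambda>z::'d site. \<forall>j. int K * \<lfloor>real N * u $ j / real K\<rfloor> + 1 \<le> z $ j
                              \<and> z $ j \<le> int K * \<lfloor>real N * u $ j / real K\<rfloor> + int K"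
  let ?c = "1 / real K ^ CARD('d)"
  have c0: "0 \<le> ?c" by simp
  have "magn K N \<eta> u - magn K N \<sigma> u = ?c * (\<Sum>z\<in>{z \<in> Lam N. ?P z}. real_of_int (\<eta> z) - real_of_int (\<sigma> z))"
    unfolding magn_def by (simp add: sum_subtractf right_diff_distrib)
  also have "\<dots> = ?c * (\<Sum>z\<in>Lam N. if ?P z then real_of_int (\<eta> z) - real_of_int (\<sigma> z) else 0)"
    by (simp add: sum.inter_filter[OF finL])
  finally have eq: "\<bar>magn K N \<eta> u - magn K N \<sigma> u\<bar> = ?c * \<bar>\<Sum>z\<in>Lam N. if ?P z then real_of_int (\<eta> z) - real_of_int (\<sigma> z) else 0\<bar>"
    by (simp add: abs_mult)
  have "\<bar>\<Sum>z\<in>Lam N. if ?P z then real_of_int (\<eta> z) - real_of_int (\<sigma> z) else 0\<bar>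
     \<le> (\<Sum>z\<in>Lam N. \<bar>if ?P z then real_of_int (\<eta> z) - real_of_int (\<sigma> z) else 0\<bar>)" by (rule sum_abs)
  also have "\<dots> \<le> (\<Sum>z\<in>Lam N. if \<eta> z \<noteq> \<sigma> z then 2 * indicator (cbox (lo K N z) (hi K N z)) u else 0)"
  proof (rule sum_mono)
    fix z :: "'d site" assume "z \<in> Lam N"
    show "\<bar>if ?P z then real_of_int (\<eta> z) - real_of_int (\<sigma> z) else 0\<bar>
        \<le> (if \<eta> z \<noteq> \<sigma> z then 2 * indicator (cbox (lo K N z) (hi K N z)) u else 0)"
    proof (cases "?P z")
      case True
      then have "u \<in> cbox (lo K N z) (hi K N z)" by (rule in_block_box[OF K N])
      moreover have "\<bar>real_of_int (\<eta> z) - real_of_int (\<sigma> z)\<bar> \<le> 2"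
      proof -
        have "\<eta> z = 1 \<or> \<eta> z = -1" "\<sigma> z = 1 \<or> \<sigma> z = -1" using sp unfolding spins_def by auto
        then show ?thesis by auto
      qed
      ultimately show ?thesis using True by (auto simp: indicator_def)
    next
      case False
      then show ?thesis by (auto simp: indicator_def)
    qed
  qed
  also have "\<dots> = (\<Sum>z\<in>{z \<in> Lam N. \<eta> z \<noteq> \<sigma> z}. 2 * indicator (cbox (lo K N z) (hi K N z)) u)"
    by (simp add: sum.inter_filter[OF finL])
  finally have "\<bar>magn K N \<eta> u - magn K N \<sigma> u\<bar> \<le> ?c * (\<Sum>z\<in>{z \<in> Lam N. \<eta> z \<noteq> \<sigma> z}. 2 * indicator (cbox (lo K N z) (hi K N z)) u)"
    unfolding eq by (rule mult_left_mono[OF _ c0])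
  then show ?thesis by (simp add: sum_distrib_left mult.assoc)
qed

lemma box_content_le:
  assumes K: "K \<ge> 1" and N: "N \<ge> 1"
  shows "measure lborel (cbox (lo K N z) (hi K N z) \<inter> cbox 0 (One :: real ^ 'd::finite)) \<le> (real K / real N) ^ CARD('d)"
proof -
  obtain A B where AB: "cbox (lo K N z) (hi K N z) \<inter> cbox 0 (One :: real ^ 'd) = cbox A B"
    using Int_interval by blast
  have "measure lborel (cbox A B) \<le> measure lborel (cbox (lo K N z) (hi K N z))"
    by (rule content_subset) (use AB in blast)
  also have "\<dots> \<le> (\<Prod>i\<in>UNIV. hi K N z $ i - lo K N z $ i)"
    unfolding content_cbox_if_cart
    by (auto intro!: prod_nonneg simp: hi_def lo_def divide_right_mono)
  also have "\<dots> = (\<Prod>i\<in>(UNIV::'d set). real K / real N)"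
    by (rule prod.cong[OF refl]) (simp add: hi_def lo_def diff_divide_distrib[symmetric])
  also have "\<dots> = (real K / real N) ^ CARD('d)" by simp
  finally show ?thesis using AB by simp
qed

lemma indicator_has_integral:
  "(indicator (cbox a b) has_integral measure lborel (cbox a b \<inter> cbox 0 One)) (cbox 0 (One :: real ^ 'd::finite))"
proof -
  obtain A B where AB: "cbox a b \<inter> cbox 0 (One :: real ^ 'd) = cbox A B"
    using Int_interval by blast
  have "((\<lambda>x. 1::real) has_integral measure lborel (cbox A B) *\<^sub>R 1) (cbox A B)"
    by (rule has_integral_const)
  then have "((\<lambda>x. 1::real) has_integral measure lborel (cbox a b \<inter> cbox 0 One)) (cbox a b \<inter> cbox 0 One)"
    unfolding AB by simp
  then have "((\<lambda>x. if x \<in> cbox a b then 1::real else 0) has_integral measure lborel (cbox a b \<inter> cbox 0 One)) (cbox 0 One)"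
    by (simp only: has_integral_restrict_Int)
  moreover have "(\<lambda>x. if x \<in> cbox a b then 1::real else 0) = indicator (cbox a b)" by (rule ext) (simp add: indicator_def)
  ultimately show ?thesis by simp
qed

lemma L1_bound:
  fixes \<sigma> \<eta> :: "'d::finite config"
  assumes K: "K \<ge> 1" and N: "N \<ge> 1" and sp: "\<sigma> \<in> spins" "\<eta> \<in> spins"
  shows "L1dist (magn K N \<eta>) (magn K N \<sigma>) \<le> 2 * real (card {z \<in> Lam N. \<eta> z \<noteq> \<sigma> z}) / real N ^ CARD('d)"
proof -
  let ?D = "{z \<in> Lam N. \<eta> z \<noteq> \<sigma> z}"
  let ?c = "2 / real K ^ CARD('d)"
  let ?C = "\<lambda>z. cbox (lo K N z) (hi K N z)"
  let ?H = "\<lambda>u. \<Sum>z\<in>?D. ?c * indicator (?C z) u"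
  let ?G = "\<lambda>u. \<bar>magn K N \<eta> u - magn K N \<sigma> u\<bar>"
  let ?I = "\<Sum>z\<in>?D. ?c * measure lborel (?C z \<inter> cbox 0 One)"
  have finD: "finite ?D" by (rule finite_subset[OF _ finite_Lam]) auto
  have Hint: "(?H has_integral ?I) (cbox 0 One)"
    by (rule has_integral_sum[OF finD], rule has_integral_mult_right, rule indicator_has_integral)
  have GH: "?G u \<le> ?H u" for u by (rule magn_diff_bound[OF K N sp])
  have I_le: "?I \<le> 2 * real (card ?D) / real N ^ CARD('d)"
  proof -
    have "?I \<le> (\<Sum>z\<in>?D. ?c * (real K / real N) ^ CARD('d))"
      by (rule sum_mono, rule mult_left_mono[OF box_content_le[OF K N]]) simp
    also have "\<dots> = 2 * real (card ?D) / real N ^ CARD('d)"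
      using K by (simp add: power_divide)
    finally show ?thesis .
  qed
  have "L1dist (magn K N \<eta>) (magn K N \<sigma>) = integral (cbox 0 One) ?G" by (simp add: L1dist_def)
  also have "\<dots> \<le> ?I"
  proof (cases "?G integrable_on cbox 0 One")
    case True
    show ?thesis by (rule has_integral_le[OF integrable_integral[OF True] Hint GH])
  next
    case False
    have "0 \<le> ?I" by (intro sum_nonneg mult_nonneg_nonneg) auto
    then show ?thesis using False by (simp add: not_integrable_integral)
  qed
  finally show ?thesis using I_le by linarith
qed

lemma Omega_sub: "(Omega N :: 'd::finite config set) \<subseteq> (\<lambda>g x. if x \<in> Lam N then g x else 1) ` (Lam N \<rightarrow>\<^sub>E {-1, 1})"
proof
  fix \<sigma> :: "'d config" assume s: "\<sigma> \<in> Omega N"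
  have "restrict \<sigma> (Lam N) \<in> Lam N \<rightarrow>\<^sub>E {-1, 1}" using s by (auto simp: Omega_def spins_def)
  moreover have "\<sigma> = (\<lambda>x. if x \<in> Lam N then restrict \<sigma> (Lam N) x else 1)"
    using s by (auto simp: Omega_def)
  ultimately show "\<sigma> \<in> (\<lambda>g x. if x \<in> Lam N then g x else 1) ` (Lam N \<rightarrow>\<^sub>E {-1, 1})"
    by (rule rev_image_eqI[where f="\<lambda>g x. if x \<in> Lam N then g x else 1"])
qed

lemma finite_Omega: "finite (Omega N :: 'd::finite config set)"
  by (rule finite_subset[OF Omega_sub]) (intro finite_imageI finite_PiE finite_Lam, auto)

lemma Omega_spins: "\<sigma> \<in> Omega N \<Longrightarrow> \<sigma> \<in> spins"
  by (simp add: Omega_def)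

lemma flip_Omega:
  assumes "\<eta> \<in> Omega N" "x \<in> Lam N"
  shows "flip \<eta> x \<in> Omega N - {\<eta>}"
proof -
  have "\<eta> x = 1 \<or> \<eta> x = -1" using assms by (auto simp: Omega_def spins_def)
  then have ne: "flip \<eta> x \<noteq> \<eta>" unfolding flip_def by (metis fun_upd_same one_neq_neg_one neg_equal_iff_equal)
  have "flip \<eta> x \<in> Omega N" using assms by (auto simp: Omega_def spins_def flip_def)
  then show ?thesis using ne by simp
qed

lemma gen_Qop:
  fixes \<eta> :: "'d::finite config"
  assumes eta: "\<eta> \<in> Omega N"
  shows "Qop (Omega N) (glauber_gen c J N) g \<eta> = (\<Sum>x\<in>Lam N. c J x \<eta> * (g (flip \<eta> x) - g \<eta>))"
proof -
  let ?S = "Omega N :: 'd config set"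
  have fin: "finite ?S" by (rule finite_Omega)
  have "Qop ?S (glauber_gen c J N) g \<eta> = glauber_gen c J N \<eta> \<eta> * g \<eta> + (\<Sum>b\<in>?S - {\<eta>}. glauber_gen c J N \<eta> b * g b)"
    unfolding Qop_def by (rule sum.remove[OF fin eta])
  also have "(\<Sum>b\<in>?S - {\<eta>}. glauber_gen c J N \<eta> b * g b) = (\<Sum>b\<in>?S - {\<eta>}. \<Sum>x\<in>Lam N. if b = flip \<eta> x then c J x \<eta> * g b else 0)"
    by (rule sum.cong[OF refl]) (auto simp: glauber_gen_def sum_distrib_right intro!: sum.cong)
  also have "\<dots> = (\<Sum>x\<in>Lam N. \<Sum>b\<in>?S - {\<eta>}. if b = flip \<eta> x then c J x \<eta> * g b else 0)"
    by (rule sum.swap)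
  also have "\<dots> = (\<Sum>x\<in>Lam N. c J x \<eta> * g (flip \<eta> x))"
  proof (rule sum.cong[OF refl])
    fix x :: "'d site" assume x: "x \<in> Lam N"
    have "finite (?S - {\<eta>})" using fin by simp
    then show "(\<Sum>b\<in>?S - {\<eta>}. if b = flip \<eta> x then c J x \<eta> * g b else 0) = c J x \<eta> * g (flip \<eta> x)"
      using flip_Omega[OF eta x] by (simp add: sum.delta)
  qed
  finally have 1: "Qop ?S (glauber_gen c J N) g \<eta> = glauber_gen c J N \<eta> \<eta> * g \<eta> + (\<Sum>x\<in>Lam N. c J x \<eta> * g (flip \<eta> x))" .
  have 2: "glauber_gen c J N \<eta> \<eta> = - (\<Sum>x\<in>Lam N. c J x \<eta>)" by (simp add: glauber_gen_def)
  show ?thesis unfolding 1 2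
    by (simp add: sum_distrib_right sum_subtractf right_diff_distrib)
qed

lemma exp_half_lt_2: "exp (1/2 :: real) < 2"
proof -
  have "exp (1/2 :: real) * exp (1/2) = exp 1" by (simp add: exp_add[symmetric])
  also have "\<dots> \<le> 3" by (rule exp_le)
  finally have "exp (1/2::real) * exp (1/2) < 2 * 2" by simp
  show ?thesis
  proof (rule ccontr)
    assume "\<not> exp (1/2::real) < 2"
    then have h: "2 \<le> exp (1/2::real)" by simp
    have "2 * 2 \<le> exp (1/2::real) * exp (1/2)" by (rule mult_mono[OF h h]) auto
    then show False using \<open>exp (1/2::real) * exp (1/2) < 2 * 2\<close> by simp
  qed
qed

lemma card_flip_le:
  fixes \<eta> \<sigma> :: "'d::finite config"
  shows "card {y \<in> Lam N. flip \<eta> x y \<noteq> \<sigma> y} \<le> card {y \<in> Lam N. \<eta> y \<noteq> \<sigma> y} + 1"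
proof -
  have fin: "finite {y \<in> Lam N. \<eta> y \<noteq> \<sigma> y}" by (rule finite_subset[OF _ finite_Lam]) auto
  have "{y \<in> Lam N. flip \<eta> x y \<noteq> \<sigma> y} \<subseteq> insert x {y \<in> Lam N. \<eta> y \<noteq> \<sigma> y}"
    by (auto simp: flip_def)
  then have "card {y \<in> Lam N. flip \<eta> x y \<noteq> \<sigma> y} \<le> card (insert x {y \<in> Lam N. \<eta> y \<noteq> \<sigma> y})"
    by (rule card_mono[OF finite_insert[THEN iffD2, OF fin]])
  also have "\<dots> \<le> card {y \<in> Lam N. \<eta> y \<noteq> \<sigma> y} + 1" by (simp add: card_insert_if fin)
  finally show ?thesis .
qed

lemma ising_sum_le:
  "(\<Sum>\<sigma>\<in>Omega N. ising \<beta> J N \<sigma>) \<le> 1" and ising_nonneg: "0 \<le> ising \<beta> J N \<sigma>"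
proof -
  have "(\<Sum>\<sigma>\<in>Omega N. ising \<beta> J N \<sigma>) = (\<Sum>\<sigma>\<in>Omega N. ising_weight \<beta> J N \<sigma>) / (\<Sum>\<eta>\<in>Omega N. ising_weight \<beta> J N \<eta>)"
    unfolding ising_def by (rule sum_divide_distrib[symmetric])
  also have "\<dots> \<le> 1" by (simp add: divide_le_eq_1)
  finally show "(\<Sum>\<sigma>\<in>Omega N. ising \<beta> J N \<sigma>) \<le> 1" .
  show "0 \<le> ising \<beta> J N \<sigma>"
    unfolding ising_def ising_weight_def by (intro divide_nonneg_nonneg sum_nonneg) auto
qed

lemma single_bound:
  fixes \<sigma>0 :: "'d::finite config" and c :: "'d rates"
  assumes ok: "rates_ok \<beta> cm cM c" and adm: "admissible J" and K: "K \<ge> 1" and N: "N \<ge> 1"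
    and sig: "\<sigma>0 \<in> Omega N" and t0: "0 \<le> t" and t1: "t \<le> \<epsilon> / (4 * cM)" and eps: "\<epsilon> > 0"
  shows "(\<Sum>\<eta>\<in>Omega N. trans_kernel (Omega N) (glauber_gen c J N) t \<sigma>0 \<eta> *
            (if L1dist (magn K N \<eta>) (magn K N \<sigma>0) \<ge> \<epsilon> then 1 else 0))
         \<le> exp (- (\<epsilon> * (2 - exp (1/2)) / 4) * real N ^ CARD('d))"
proof -
  have cm: "0 < cm" "cm \<le> cM" using ok by (auto simp: rates_ok_def)
  have bnd: "\<And>x \<sigma>. \<sigma> \<in> spins \<Longrightarrow> cm \<le> c J x \<sigma> \<and> c J x \<sigma> \<le> cM"
    using ok adm unfolding rates_ok_def by blast
  have c0: "\<And>x \<sigma>. \<sigma> \<in> Omega N \<Longrightarrow> 0 \<le> c J x \<sigma> \<and> c J x \<sigma> \<le> cM"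
    using bnd cm Omega_spins by (metis order_trans less_imp_le)
  have cMpos: "0 < cM" using cm by simp
  define L where "L = real N ^ CARD('d)"
  have Lpos: "0 < L" using N by (simp add: L_def)
  have Lc: "real (card (Lam N :: 'd site set)) = L" by (simp add: card_Lam L_def)
  define \<theta> :: real where "\<theta> = 1/2"
  define m where "m = \<epsilon> * L / 2"
  define D where "D = (\<lambda>\<eta>::'d config. real (card {y \<in> Lam N. \<eta> y \<noteq> \<sigma>0 y}))"
  define g where "g = (\<lambda>\<eta>. exp (\<theta> * D \<eta> - \<theta> * m))"
  define h where "h = (\<lambda>\<eta>. if L1dist (magn K N \<eta>) (magn K N \<sigma>0) \<ge> \<epsilon> then 1 else (0::real))"
  define a where "a = cM * L"
  define lam where "lam = cM * L * (exp \<theta> - 1)"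
  have th: "0 \<le> exp \<theta> - 1" by (simp add: \<theta>_def)
  have Bpos: "0 \<le> glauber_gen c J N z b + (if z = b then a else 0)" if z: "z \<in> Omega N" and "b \<in> Omega N" for z b
  proof (cases "z = b")
    case True
    have "(\<Sum>x\<in>Lam N. c J x z) \<le> (\<Sum>x\<in>(Lam N :: 'd site set). cM)" by (rule sum_mono) (use c0[OF z] in auto)
    also have "\<dots> = a" by (simp add: a_def Lc[symmetric])
    finally show ?thesis using True by (simp add: glauber_gen_def)
  next
    case False
    then show ?thesis using c0[OF z] by (auto simp: glauber_gen_def intro!: sum_nonneg)
  qed
  have hg: "h \<eta> \<le> g \<eta>" if "\<eta> \<in> Omega N" for \<eta>
  proof (cases "L1dist (magn K N \<eta>) (magn K N \<sigma>0) \<ge> \<epsilon>")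
    case True
    have "\<epsilon> \<le> 2 * D \<eta> / L"
      using order_trans[OF True L1_bound[OF K N Omega_spins[OF sig] Omega_spins[OF that]]]
      by (simp add: D_def L_def)
    then have "\<epsilon> * L \<le> 2 * D \<eta>" using Lpos by (simp add: pos_le_divide_eq)
    then have "m \<le> D \<eta>" by (simp add: m_def)
    then have "0 \<le> \<theta> * D \<eta> - \<theta> * m" by (simp add: \<theta>_def)
    then have "1 \<le> g \<eta>" by (simp add: g_def)
    then show ?thesis using True by (simp add: h_def)
  next
    case False
    then show ?thesis by (simp add: h_def g_def)
  qed
  have Qg: "Qop (Omega N) (glauber_gen c J N) g z \<le> lam * g z" if z: "z \<in> Omega N" for z
  proof -
    have gf: "g (flip z x) - g z \<le> (exp \<theta> - 1) * g z" for x
    proof -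
      have "D (flip z x) \<le> D z + 1" unfolding D_def using card_flip_le[of N z x \<sigma>0] by linarith
      then have "\<theta> * D (flip z x) - \<theta> * m \<le> \<theta> + (\<theta> * D z - \<theta> * m)" by (simp add: \<theta>_def)
      then have "g (flip z x) \<le> exp \<theta> * g z" unfolding g_def by (simp add: exp_add[symmetric])
      then show ?thesis by (simp add: algebra_simps)
    qed
    have "Qop (Omega N) (glauber_gen c J N) g z = (\<Sum>x\<in>Lam N. c J x z * (g (flip z x) - g z))"
      by (rule gen_Qop[OF z])
    also have "\<dots> \<le> (\<Sum>x\<in>(Lam N :: 'd site set). cM * ((exp \<theta> - 1) * g z))"
    proof (rule sum_mono)
      fix x :: "'d site"
      have "c J x z * (g (flip z x) - g z) \<le> c J x z * ((exp \<theta> - 1) * g z)"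
        by (rule mult_left_mono[OF gf]) (use c0[OF z] in auto)
      also have "\<dots> \<le> cM * ((exp \<theta> - 1) * g z)"
        by (rule mult_right_mono) (use c0[OF z] th in \<open>auto simp: g_def\<close>)
      finally show "c J x z * (g (flip z x) - g z) \<le> cM * ((exp \<theta> - 1) * g z)" .
    qed
    also have "\<dots> = lam * g z" by (simp add: lam_def Lc[symmetric])
    finally show ?thesis .
  qed
  have mu: "0 \<le> lam + a" using th cMpos Lpos by (simp add: lam_def a_def)
  have "(\<Sum>\<eta>\<in>Omega N. trans_kernel (Omega N) (glauber_gen c J N) t \<sigma>0 \<eta> * h \<eta>) \<le> exp (lam * t) * g \<sigma>0"
    by (rule markov_bound[OF finite_Omega sig t0 Bpos hg Qg mu])
  also have "g \<sigma>0 = exp (- \<theta> * m)" by (simp add: g_def D_def)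
  also have "exp (lam * t) * exp (- \<theta> * m) = exp (lam * t - \<theta> * m)" by (simp add: exp_add[symmetric])
  also have "\<dots> \<le> exp (- (\<epsilon> * (2 - exp (1/2)) / 4) * real N ^ CARD('d))"
  proof -
    have "lam * t \<le> lam * (\<epsilon> / (4 * cM))"
      by (rule mult_left_mono[OF t1]) (use th cMpos Lpos in \<open>simp add: lam_def\<close>)
    also have "\<dots> = L * (exp \<theta> - 1) * \<epsilon> / 4" using cMpos by (simp add: lam_def field_simps)
    finally have "lam * t - \<theta> * m \<le> L * (exp \<theta> - 1) * \<epsilon> / 4 - \<theta> * m" by simp
    also have "\<dots> = - (\<epsilon> * (2 - exp (1/2)) / 4) * L" by (simp add: \<theta>_def m_def field_simps)
    finally show ?thesis by (simp add: L_def)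
  qed
  finally show ?thesis by (simp add: h_def)
qed

theorem lemma3p19:
  fixes \<beta> \<epsilon> cm cM :: real and c :: "'d::finite rates"
  assumes "CARD('d) \<ge> 2"
    and "\<beta> > 0" and "\<epsilon> > 0"
    and "rates_ok \<beta> cm cM c"
  shows "\<exists>\<kappa>>0. \<forall>K::nat. K \<ge> 1 \<longrightarrow> (\<exists>N0. \<forall>N\<ge>N0.
           \<forall>t\<in>{0..\<epsilon> / (4 * cM)}. \<forall>J. admissible J \<longrightarrow>
             dyn_prob \<beta> c J N K t \<epsilon> \<le> exp (- \<kappa> * real N ^ CARD('d)))"
proof -
  let ?\<kappa> = "\<epsilon> * (2 - exp (1/2)) / 4"
  have kpos: "?\<kappa> > 0" using exp_half_lt_2 assms(3) by simp
  have main: "dyn_prob \<beta> c J N K t \<epsilon> \<le> exp (- ?\<kappa> * real N ^ CARD('d))"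
    if K: "K \<ge> 1" and N: "N \<ge> 1" and t: "t \<in> {0..\<epsilon> / (4 * cM)}" and adm: "admissible J" for K N t J
  proof -
    let ?B = "exp (- ?\<kappa> * real N ^ CARD('d))"
    let ?P = "trans_kernel (Omega N) (glauber_gen c J N) t"
    let ?h = "\<lambda>\<sigma> \<eta>. if L1dist (magn K N \<eta>) (magn K N \<sigma>) \<ge> \<epsilon> then 1 else (0::real)"
    have "dyn_prob \<beta> c J N K t \<epsilon> = (\<Sum>\<sigma>\<in>Omega N. ising \<beta> J N \<sigma> * (\<Sum>\<eta>\<in>Omega N. ?P \<sigma> \<eta> * ?h \<sigma> \<eta>))"
      unfolding dyn_prob_def by (simp add: sum_distrib_left mult.assoc)
    also have "\<dots> \<le> (\<Sum>\<sigma>\<in>Omega N. ising \<beta> J N \<sigma> * ?B)"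
    proof (rule sum_mono, rule mult_left_mono)
      fix \<sigma> :: "'d config" assume "\<sigma> \<in> Omega N"
      show "(\<Sum>\<eta>\<in>Omega N. ?P \<sigma> \<eta> * ?h \<sigma> \<eta>) \<le> ?B"
        by (rule single_bound[OF assms(4) adm K N \<open>\<sigma> \<in> Omega N\<close>]) (use t assms(3) in auto)
      show "0 \<le> ising \<beta> J N \<sigma>" by (rule ising_nonneg)
    qed
    also have "\<dots> = (\<Sum>\<sigma>\<in>Omega N. ising \<beta> J N \<sigma>) * ?B" by (simp add: sum_distrib_right)
    also have "\<dots> \<le> 1 * ?B" by (rule mult_right_mono[OF ising_sum_le]) simp
    finally show ?thesis by simp
  qed
  show ?thesis
  proof (intro exI[of _ ?\<kappa>] conjI kpos allI impI)
    fix K :: nat assume K: "K \<ge> 1"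
    show "\<exists>N0. \<forall>N\<ge>N0. \<forall>t\<in>{0..\<epsilon> / (4 * cM)}. \<forall>J. admissible J \<longrightarrow>
             dyn_prob \<beta> c J N K t \<epsilon> \<le> exp (- ?\<kappa> * real N ^ CARD('d))"
    proof (intro exI[of _ "1::nat"] allI impI ballI)
      fix N :: nat and t :: real and J :: "'d coupling" assume "N \<ge> 1" "t \<in> {0..\<epsilon> / (4 * cM)}" "admissible J"
      then show "dyn_prob \<beta> c J N K t \<epsilon> \<le> exp (- ?\<kappa> * real N ^ CARD('d))"
        by (intro main K)
    qed
  qed
qed

end
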